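(* Fix an architecture $(\mathbf d,\mathbf k,\mathbf s)$ of depth $N$, a loss $\ell:\mathbb{R}^{d_N}\times\mathbb{R}^{d_N}\to\mathbb{R}$, and data $X=(x_1,\dots,x_m)\in\mathbb{R}^{d_0\times m}$, $Y=(y_1,\dots,y_m)\in\mathbb{R}^{d_N\times m}$, and let $\mathcal{L}(\vec w)=\sum_{i=1}^m\ell(\Pi(\vec w)x_i,y_i)$. Assume that $XX^\top$ has full rank and that there exists a monotonically increasing function $h:\mathbb{R}\to\mathbb{R}_{\ge0}$ such that \[ \|WX-Y\|_1\le h\Big(\sum_{i=1}^m\ell(Wx_i,y_i)\Big)\qquad\text{for all } W\in\mathbb{R}^{d_N\times d_0}. \] Then there exists a non-decreasing function $g:\mathbb{R}\to\mathbb{R}_{\ge0}$ such that $\|\pi(\vec w)\|_1\le g(\mathcal{L}(\vec w))$ for all $\vec w\in\mathbb{R}^{\sum_{i=1}^N k_i}$.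
   Context: An architecture of depth $N$ is a triple $(\mathbf d,\mathbf k,\mathbf s)=((d_0,\dots,d_N),(k_1,\dots,k_N),(s_1,\dots,s_N))$ of positive integers with $d_i=\frac{d_{i-1}-k_i}{s_i}+1$. For a filter $w\in\mathbb{R}^{k}$ and stride $s$, the convolutional matrix $\Pi_{(d',d''),k,s}(w)\in\mathbb{R}^{d''\times d'}$ has entries $W_{j,(j-1)s+n}=w_n$ ($j\le d''$, $n\le k$) and zeros elsewhere. For $\vec w=(w^{(1)},\dots,w^{(N)})$, $w^{(i)}\in\mathbb{R}^{k_i}$, $\Pi(\vec w):=W_N\cdots W_1$ with $W_i=\Pi_{(d_{i-1},d_i),k_i,s_i}(w^{(i)})$; this is a convolutional matrix with stride $\prod_i s_i$ and filter width $k_v=k_1+\sum_{i=2}^N(k_i-1)\prod_{m=1}^{i-1}s_m$, and its filter is denoted $\pi(\vec w)\in\mathbb{R}^{k_v}$. For a matrix $A=(a_{ij})$, $\|A\|_1:=\sum_{i,j}|a_{ij}|$ (entrywise $\ell_1$-norm); for vectors $\|\cdot\|_1$ is the usual $\ell_1$-norm. *)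

theory Defs
  imports "Jordan_Normal_Form.DL_Rank"
begin

(* All matrices/vectors are Jordan_Normal_Form matrices/vectors, 0-based indices. *)

definition is_architecture :: "nat \<Rightarrow> (nat \<Rightarrow> nat) \<Rightarrow> (nat \<Rightarrow> nat) \<Rightarrow> (nat \<Rightarrow> nat) \<Rightarrow> bool" where
  "is_architecture N d k s \<longleftrightarrow>
     (\<forall>i\<le>N. 0 < d i) \<and>
     (\<forall>i\<in>{1..N}. 0 < k i \<and> 0 < s i \<and>
        real (d i) = (real (d (i - 1)) - real (k i)) / real (s i) + 1)"

(* Pi_{(d',d''),k,s}(w) in R^{d'' x d'}: (1-based) W_{j,(j-1)s+n} = w_n, zero elsewhere. *)
definition conv_mat :: "nat \<Rightarrow> nat \<Rightarrow> nat \<Rightarrow> nat \<Rightarrow> real vec \<Rightarrow> real mat" where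
  "conv_mat d' d'' k s w =
     mat d'' d' (\<lambda>(j, c). if j * s \<le> c \<and> c < j * s + k then w $ (c - j * s) else 0)"

fun net_mat :: "(nat \<Rightarrow> nat) \<Rightarrow> (nat \<Rightarrow> nat) \<Rightarrow> (nat \<Rightarrow> nat) \<Rightarrow> (nat \<Rightarrow> real vec) \<Rightarrow> nat \<Rightarrow> real mat" where
  "net_mat d k s w 0 = 1\<^sub>m (d 0)"
| "net_mat d k s w (Suc i) = conv_mat (d i) (d (Suc i)) (k (Suc i)) (s (Suc i)) (w (Suc i)) * net_mat d k s w i"

definition Pi_net :: "nat \<Rightarrow> (nat \<Rightarrow> nat) \<Rightarrow> (nat \<Rightarrow> nat) \<Rightarrow> (nat \<Rightarrow> nat) \<Rightarrow> (nat \<Rightarrow> real vec) \<Rightarrow> real mat" where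
  "Pi_net N d k s w = net_mat d k s w N"

definition filter_width :: "nat \<Rightarrow> (nat \<Rightarrow> nat) \<Rightarrow> (nat \<Rightarrow> nat) \<Rightarrow> nat" where
  "filter_width N k s = k 1 + (\<Sum>i = 2..N. (k i - 1) * (\<Prod>m = 1..i - 1. s m))"

definition pi_filter :: "nat \<Rightarrow> (nat \<Rightarrow> nat) \<Rightarrow> (nat \<Rightarrow> nat) \<Rightarrow> (nat \<Rightarrow> nat) \<Rightarrow> (nat \<Rightarrow> real vec) \<Rightarrow> real vec" where
  "pi_filter N d k s w = vec (filter_width N k s) (\<lambda>n. Pi_net N d k s w $$ (0, n))"

definition l1_vec :: "real vec \<Rightarrow> real" where
  "l1_vec v = (\<Sum>i < dim_vec v. \<bar>v $ i\<bar>)"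

definition l1_mat :: "real mat \<Rightarrow> real" where
  "l1_mat A = (\<Sum>i < dim_row A. \<Sum>j < dim_col A. \<bar>A $$ (i, j)\<bar>)"

definition emp_loss :: "(real vec \<Rightarrow> real vec \<Rightarrow> real) \<Rightarrow> real mat \<Rightarrow> real mat \<Rightarrow> real mat \<Rightarrow> real" where
  "emp_loss loss X Y W = (\<Sum>i < dim_col X. loss (mult_mat_vec W (col X i)) (col Y i))"

end

theory Submission
  imports Defs
begin

lemma l1_mat_nonneg: "0 \<le> l1_mat A"
  unfolding l1_mat_def by (intro sum_nonneg) auto

lemma l1_mat_mult:
  assumes A: "A \<in> carrier_mat n p" and B: "B \<in> carrier_mat p q"
  shows "l1_mat (A * B) \<le> l1_mat A * l1_mat B"
proof -
  define SB where "SB = (\<Sum>l<p. \<Sum>j<q. \<bar>B $$ (l, j)\<bar>)"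
  have rowb: "(\<Sum>j<q. \<bar>B $$ (l, j)\<bar>) \<le> SB" if "l < p" for l
    unfolding SB_def
    by (rule member_le_sum[where f="\<lambda>l. \<Sum>j<q. \<bar>B $$ (l, j)\<bar>"]) (use that in \<open>auto intro: sum_nonneg\<close>)
  have "l1_mat (A * B) = (\<Sum>i<n. \<Sum>j<q. \<bar>\<Sum>l<p. A $$ (i, l) * B $$ (l, j)\<bar>)"
    unfolding l1_mat_def using A B
    by (auto simp: scalar_prod_def intro!: sum.cong) (simp add: lessThan_atLeast0)
  also have "\<dots> \<le> (\<Sum>i<n. \<Sum>j<q. \<Sum>l<p. \<bar>A $$ (i, l)\<bar> * \<bar>B $$ (l, j)\<bar>)"
    by (intro sum_mono) (metis (no_types, lifting) abs_mult sum.cong sum_abs)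
  also have "\<dots> = (\<Sum>i<n. \<Sum>l<p. \<bar>A $$ (i, l)\<bar> * (\<Sum>j<q. \<bar>B $$ (l, j)\<bar>))"
    by (simp add: sum.swap[of _ "{..<q}"] sum_distrib_left)
  also have "\<dots> \<le> (\<Sum>i<n. \<Sum>l<p. \<bar>A $$ (i, l)\<bar> * SB)"
    by (intro sum_mono mult_left_mono rowb) auto
  also have "\<dots> = l1_mat A * l1_mat B"
    using A B by (simp add: l1_mat_def SB_def sum_distrib_right)
  finally show ?thesis .
qed

lemma l1_mat_tri:
  assumes P: "P \<in> carrier_mat n p" and Y: "Y \<in> carrier_mat n p"
  shows "l1_mat P \<le> l1_mat (P - Y) + l1_mat Y"
proof -
  have "l1_mat P = (\<Sum>i<n. \<Sum>j<p. \<bar>(P $$ (i,j) - Y $$ (i,j)) + Y $$ (i,j)\<bar>)"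
    using P unfolding l1_mat_def by simp
  also have "\<dots> \<le> (\<Sum>i<n. \<Sum>j<p. \<bar>P $$ (i,j) - Y $$ (i,j)\<bar> + \<bar>Y $$ (i,j)\<bar>)"
    by (intro sum_mono abs_triangle_ineq)
  also have "\<dots> = l1_mat (P - Y) + l1_mat Y"
    using P Y unfolding l1_mat_def by (simp add: sum.distrib)
  finally show ?thesis .
qed

lemma net_mat_carrier: "net_mat d k s w j \<in> carrier_mat (d j) (d 0)"
  by (induction j) (auto simp: conv_mat_def)

lemma arch_eq:
  assumes arch: "is_architecture N d k s" and "j \<le> N"
  shows "real (d 0) - 1 = (\<Sum>i=1..j. real (k i - 1) * real (\<Prod>m=1..i-1. s m))
            + (real (d j) - 1) * real (\<Prod>m=1..j. s m)"
  using assms(2)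
proof (induction j)
  case 0 then show ?case by simp
next
  case (Suc j)
  from arch Suc.prems have kp: "0 < k (Suc j)" and sp: "0 < s (Suc j)"
    and eq: "real (d (Suc j)) = (real (d j) - real (k (Suc j))) / real (s (Suc j)) + 1"
    unfolding is_architecture_def by auto
  from eq sp have eq2: "real (d j) - 1 = (real (d (Suc j)) - 1) * real (s (Suc j)) + (real (k (Suc j)) - 1)"
    by (simp add: field_simps)
  have pr: "(\<Prod>m=1..Suc j. s m) = (\<Prod>m=1..j. s m) * s (Suc j)"
    by (simp add: prod.cl_ivl_Suc)
  show ?case using Suc.IH Suc.prems kp
    by (simp add: eq2 pr of_nat_diff algebra_simps)
qed

lemma fw_le:
  assumes arch: "is_architecture N d k s" and N: "1 \<le> N"
  shows "filter_width N k s \<le> d 0"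
proof -
  have dN: "1 \<le> real (d N)" using arch unfolding is_architecture_def by auto
  have k1: "0 < k 1" using arch N unfolding is_architecture_def by auto
  have "(\<Sum>i=1..N. real (k i - 1) * real (\<Prod>m=1..i-1. s m))
      = real (k 1 - 1) + (\<Sum>i=2..N. real (k i - 1) * real (\<Prod>m=1..i-1. s m))"
    using N by (simp add: sum.atLeast_Suc_atMost numeral_2_eq_2)
  moreover have "0 \<le> (real (d N) - 1) * real (\<Prod>m=1..N. s m)" using dN by (intro mult_nonneg_nonneg) (simp_all add: prod_nonneg)
  ultimately have "real (filter_width N k s) \<le> real (d 0)"
    using arch_eq[OF arch order_refl] k1 unfolding filter_width_def
    by (simp add: of_nat_diff)
  then show ?thesis by simp
qed


theorem lemma3p6:
  fixes N m :: nat and d k s :: "nat \<Rightarrow> nat"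
    and loss :: "real vec \<Rightarrow> real vec \<Rightarrow> real"
    and X Y :: "real mat" and h :: "real \<Rightarrow> real"
  assumes "1 \<le> N"
    and "is_architecture N d k s"
    and "X \<in> carrier_mat (d 0) m" and "Y \<in> carrier_mat (d N) m"
    and "vec_space.rank (d 0) (X * X\<^sup>T) = d 0"
    and "mono h" and "\<forall>x. 0 \<le> h x"
    and "\<forall>W \<in> carrier_mat (d N) (d 0). l1_mat (W * X - Y) \<le> h (emp_loss loss X Y W)"
  shows "\<exists>g :: real \<Rightarrow> real. mono g \<and> (\<forall>x. 0 \<le> g x) \<and>
           (\<forall>w :: nat \<Rightarrow> real vec. (\<forall>i\<in>{1..N}. w i \<in> carrier_vec (k i)) \<longrightarrow>
              l1_vec (pi_filter N d k s w) \<le> g (emp_loss loss X Y (Pi_net N d k s w)))"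
proof -
  note X = assms(3) and Yc = assms(4)
  define A where "A = X * X\<^sup>T"
  have Ac: "A \<in> carrier_mat (d 0) (d 0)" using X unfolding A_def by auto
  have detA: "det A \<noteq> 0" using vec_space.det_rank_iff[OF Ac] assms(5) unfolding A_def by simp
  define B where "B = (1 / det A) \<cdot>\<^sub>m adj_mat A"
  have Bc: "B \<in> carrier_mat (d 0) (d 0)" using adj_mat(1)[OF Ac] unfolding B_def by auto
  have sm: "(1 / det A) \<cdot>\<^sub>m (det A \<cdot>\<^sub>m 1\<^sub>m (d 0)) = 1\<^sub>m (d 0)"
    by (rule eq_matI) (use detA in auto)
  have AB: "A * B = 1\<^sub>m (d 0)"
    unfolding B_def using adj_mat(1,2)[OF Ac] Ac detA
    by (simp add: mult_smult_distrib[of A "d 0" "d 0" "adj_mat A" "d 0"] sm)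
  define R where "R = X\<^sup>T * B"
  have Rc: "R \<in> carrier_mat m (d 0)" using X Bc unfolding R_def by auto
  have XR: "X * R = 1\<^sub>m (d 0)"
    using AB assoc_mult_mat[of X "d 0" m "X\<^sup>T" "d 0" B "d 0"] X Bc unfolding R_def A_def by simp
  define C where "C = l1_mat R"
  have C0: "0 \<le> C" unfolding C_def by (rule l1_mat_nonneg)
  define g where "g t = C * (h t + l1_mat Y)" for t
  have mg: "mono g" unfolding g_def mono_def
    using assms(6) C0 by (auto simp: mono_def intro!: mult_left_mono)
  have g0: "0 \<le> g t" for t unfolding g_def using C0 assms(7) l1_mat_nonneg[of Y] by simp
  show ?thesis
  proof (intro exI[of _ g] conjI allI impI mg g0)
    fix w :: "nat \<Rightarrow> real vec"
    define W where "W = Pi_net N d k s w"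
    have Wc: "W \<in> carrier_mat (d N) (d 0)" unfolding W_def Pi_net_def by (rule net_mat_carrier)
    have fw: "filter_width N k s \<le> d 0" by (rule fw_le[OF assms(2,1)])
    have dN: "0 < d N" using assms(2) unfolding is_architecture_def by auto
    have "l1_vec (pi_filter N d k s w) = (\<Sum>n<filter_width N k s. \<bar>W $$ (0, n)\<bar>)"
      unfolding l1_vec_def pi_filter_def W_def by simp
    also have "\<dots> \<le> (\<Sum>n<d 0. \<bar>W $$ (0, n)\<bar>)"
      using fw by (intro sum_mono2) auto
    also have "\<dots> \<le> (\<Sum>i<d N. \<Sum>n<d 0. \<bar>W $$ (i, n)\<bar>)"
      by (rule member_le_sum[where f="\<lambda>i. \<Sum>n<d 0. \<bar>W $$ (i, n)\<bar>"]) (use dN in \<open>auto intro: sum_nonneg\<close>)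
    also have "\<dots> = l1_mat W" using Wc unfolding l1_mat_def by simp
    also have "W = (W * X) * R"
      using Wc X Rc XR assoc_mult_mat[of W "d N" "d 0" X m R "d 0"] by simp
    also have "l1_mat \<dots> \<le> l1_mat (W * X) * C"
      unfolding C_def by (rule l1_mat_mult[OF _ Rc]) (use Wc X in auto)
    also have "\<dots> \<le> (l1_mat (W * X - Y) + l1_mat Y) * C"
      by (intro mult_right_mono l1_mat_tri[OF _ Yc] C0) (use Wc X in auto)
    also have "\<dots> \<le> (h (emp_loss loss X Y W) + l1_mat Y) * C"
      using assms(8) Wc C0 by (intro mult_right_mono) auto
    also have "\<dots> = g (emp_loss loss X Y W)" unfolding g_def by simp
    finally show "l1_vec (pi_filter N d k s w) \<le> g (emp_loss loss X Y (Pi_net N d k s w))"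
      unfolding W_def .
  qed
qed

end
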